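(* Let $\Gamma\in\mathcal S$ have $n>1$ vertices. Then no embedding $\varphi$ of $\Gamma$ into $\mathbb Z^n$ (as in the definition of $\mathcal S$) has an index of type (3); that is, there is no index $i$ such that exactly one vertex $v$ has nonzero coefficient at $E_i$ in $\varphi(v)$ and that coefficient equals $-2$.
   Context: A plumbing tree is a finite tree $\Gamma$ each of whose vertices $v$ carries an integer decoration $d(v)$. $\Gamma$ is minimal if no vertex has decoration $-1$. For $n\ge 1$ let $(\mathbb Z^n,Q_n)$ be the lattice with basis $E_1,\dots,E_n$ and $Q_n(E_i,E_j)=-\delta_{ij}$, and let $K=\sum_{i=1}^n E_i$. A plumbing tree $\Gamma$ on $n$ vertices is a symplectic plumbing tree if there is a map $\varphi$ (an embedding) from its vertex set to $\mathbb Z^n$ such that: for distinct vertices $v_1,v_2$, $Q_n(\varphi(v_1),\varphi(v_2))$ is $1$ if they are adjacent and $0$ otherwise; $Q_n(\varphi(v),\varphi(v))=d(v)$ for every $v$; and $Q_n(\varphi(v),K)+Q_n(\varphi(v),\varphi(v))=-2$ for every $v$. $\mathcal S$ is the set of minimal, connected symplectic plumbing trees. *)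

theory Defs
  imports Main
begin

text \<open>Vectors of Z^n are functions nat => int supported on {0..<n};
E_i corresponds to coordinate i (0-based).\<close>

definition is_cycle :: "('a \<Rightarrow> 'a \<Rightarrow> bool) \<Rightarrow> 'a list \<Rightarrow> bool" where
  "is_cycle E cs \<longleftrightarrow> length cs \<ge> 3 \<and> distinct cs \<and>
     (\<forall>i. i + 1 < length cs \<longrightarrow> E (cs ! i) (cs ! (i + 1))) \<and> E (last cs) (hd cs)"

definition is_tree :: "'a set \<Rightarrow> ('a \<Rightarrow> 'a \<Rightarrow> bool) \<Rightarrow> bool" where
  "is_tree V E \<longleftrightarrow> finite V \<and> V \<noteq> {} \<and>
     (\<forall>u v. E u v \<longrightarrow> u \<in> V \<and> v \<in> V) \<and>
     (\<forall>u v. E u v \<longrightarrow> E v u) \<and> (\<forall>v. \<not> E v v) \<and>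
     (\<forall>u\<in>V. \<forall>v\<in>V. E\<^sup>*\<^sup>* u v) \<and>
     \<not> (\<exists>cs. is_cycle E cs)"

definition Qn :: "nat \<Rightarrow> (nat \<Rightarrow> int) \<Rightarrow> (nat \<Rightarrow> int) \<Rightarrow> int" where
  "Qn n x y = - (\<Sum>i<n. x i * y i)"

definition Kn :: "nat \<Rightarrow> nat \<Rightarrow> int" where
  "Kn n = (\<lambda>i. if i < n then 1 else 0)"

definition symplectic_embedding ::
  "'a set \<Rightarrow> ('a \<Rightarrow> 'a \<Rightarrow> bool) \<Rightarrow> ('a \<Rightarrow> int) \<Rightarrow> nat \<Rightarrow> ('a \<Rightarrow> nat \<Rightarrow> int) \<Rightarrow> bool" where
  "symplectic_embedding V E d n \<phi> \<longleftrightarrow>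
     (\<forall>v\<in>V. \<forall>i. n \<le> i \<longrightarrow> \<phi> v i = 0) \<and>
     (\<forall>v1\<in>V. \<forall>v2\<in>V. v1 \<noteq> v2 \<longrightarrow> Qn n (\<phi> v1) (\<phi> v2) = (if E v1 v2 then 1 else 0)) \<and>
     (\<forall>v\<in>V. Qn n (\<phi> v) (\<phi> v) = d v) \<and>
     (\<forall>v\<in>V. Qn n (\<phi> v) (Kn n) + Qn n (\<phi> v) (\<phi> v) = -2)"

definition symplectic_plumbing_tree :: "'a set \<Rightarrow> ('a \<Rightarrow> 'a \<Rightarrow> bool) \<Rightarrow> ('a \<Rightarrow> int) \<Rightarrow> bool" where
  "symplectic_plumbing_tree V E d \<longleftrightarrow> is_tree V E \<and>
     (\<exists>\<phi>. symplectic_embedding V E d (card V) \<phi>)"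

definition minimal_tree :: "'a set \<Rightarrow> ('a \<Rightarrow> int) \<Rightarrow> bool" where
  "minimal_tree V d \<longleftrightarrow> (\<forall>v\<in>V. d v \<noteq> -1)"

definition in_S :: "'a set \<Rightarrow> ('a \<Rightarrow> 'a \<Rightarrow> bool) \<Rightarrow> ('a \<Rightarrow> int) \<Rightarrow> bool" where
  "in_S V E d \<longleftrightarrow> minimal_tree V d \<and> symplectic_plumbing_tree V E d"

end

theory Submission
  imports Defs "Jordan_Normal_Form.Determinant"
begin

lemma kernel_exists:
  fixes V :: "'a set" and \<psi> :: "'a \<Rightarrow> nat \<Rightarrow> int"
  assumes fin: "finite V" and i: "i < card V" and z: "\<forall>u\<in>V. \<psi> u i = 0"
  shows "\<exists>X. (\<exists>u\<in>V. X u \<noteq> 0) \<and> (\<forall>j<card V. (\<Sum>u\<in>V. X u * \<psi> u j) = 0)"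
proof -
  define n where "n = card V"
  obtain g where g: "bij_betw g V {0..<n}" using ex_bij_betw_finite_nat[OF fin] n_def by blast
  define h where "h = inv_into V g"
  have h: "bij_betw h {0..<n} V" using g bij_betw_inv_into h_def by blast
  have gh: "\<And>k. k < n \<Longrightarrow> g (h k) = k" using g h_def bij_betw_inv_into_right by fastforce
  define A :: "int mat" where "A = mat\<^sub>r n n (\<lambda>j. if j = i then 0\<^sub>v n else vec n (\<lambda>k. \<psi> (h k) j))"
  have Ac: "A \<in> carrier_mat n n" unfolding A_def by auto
  have "det A = 0" unfolding A_def
    by (rule det_row_0) (use i n_def in auto)
  then obtain x where x: "x \<in> carrier_vec n" "x \<noteq> 0\<^sub>v n" "A *\<^sub>v x = 0\<^sub>v n"
    using det_0_iff_vec_prod_zero[OF Ac] by blast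
  have Aent: "\<And>j k. j < n \<Longrightarrow> k < n \<Longrightarrow> A $$ (j,k) = \<psi> (h k) j"
  proof -
    fix j k assume "j < n" "k < n"
    moreover have "h k \<in> V" using h \<open>k < n\<close> bij_betwE by fastforce
    ultimately show "A $$ (j,k) = \<psi> (h k) j" unfolding A_def using z by auto
  qed
  obtain k0 where k0: "k0 < n" "x $ k0 \<noteq> 0"
    using x(1,2) by (metis carrier_vecD eq_vecI index_zero_vec(1) index_zero_vec(2))
  define X where "X u = x $ (g u)" for u
  have "\<forall>j<n. (\<Sum>u\<in>V. X u * \<psi> u j) = 0"
  proof (intro allI impI)
    fix j assume j: "j < n"
    have "0 = (A *\<^sub>v x) $ j" using x(3) j by simp
    also have "\<dots> = (\<Sum>k\<in>{0..<n}. A $$ (j,k) * x $ k)"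
      using j Ac x(1) by (simp add: scalar_prod_def)
    also have "\<dots> = (\<Sum>k\<in>{0..<n}. X (h k) * \<psi> (h k) j)"
      by (rule sum.cong) (auto simp: Aent j X_def gh)
    also have "\<dots> = (\<Sum>u\<in>V. X u * \<psi> u j)"
      by (rule sum.reindex_bij_betw[OF h])
    finally show "(\<Sum>u\<in>V. X u * \<psi> u j) = 0" by simp
  qed
  moreover have "h k0 \<in> V" "X (h k0) \<noteq> 0" using h k0 gh X_def bij_betwE by fastforce+
  ultimately show ?thesis unfolding n_def by blast
qed


lemma abs_kernel:
  fixes \<psi> :: "'a \<Rightarrow> nat \<Rightarrow> int" and X :: "'a \<Rightarrow> int"
  assumes fin: "finite V"
   and neg: "\<And>u w. u\<in>V \<Longrightarrow> w\<in>V \<Longrightarrow> u\<noteq>w \<Longrightarrow> (\<Sum>j<n. \<psi> u j * \<psi> w j) \<le> 0"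
   and ker: "\<forall>j<n. (\<Sum>u\<in>V. X u * \<psi> u j) = 0"
  shows "\<forall>j<n. (\<Sum>u\<in>V. \<bar>X u\<bar> * \<psi> u j) = 0"
proof -
  have expand: "(\<Sum>j<n. (\<Sum>u\<in>V. Y u * \<psi> u j)^2) = (\<Sum>u\<in>V. \<Sum>w\<in>V. Y u * Y w * (\<Sum>j<n. \<psi> u j * \<psi> w j))"
    for Y :: "'a \<Rightarrow> int"
  proof -
    have "(\<Sum>j<n. (\<Sum>u\<in>V. Y u * \<psi> u j)^2) = (\<Sum>j<n. \<Sum>u\<in>V. \<Sum>w\<in>V. Y u * Y w * (\<psi> u j * \<psi> w j))"
      by (simp add: power2_eq_square sum_product mult_ac)
    also have "\<dots> = (\<Sum>u\<in>V. \<Sum>j<n. \<Sum>w\<in>V. Y u * Y w * (\<psi> u j * \<psi> w j))"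
      by (rule sum.swap)
    also have "\<dots> = (\<Sum>u\<in>V. \<Sum>w\<in>V. \<Sum>j<n. Y u * Y w * (\<psi> u j * \<psi> w j))"
      by (rule sum.cong[OF refl], rule sum.swap)
    also have "\<dots> = (\<Sum>u\<in>V. \<Sum>w\<in>V. Y u * Y w * (\<Sum>j<n. \<psi> u j * \<psi> w j))"
      by (simp add: sum_distrib_left)
    finally show ?thesis .
  qed
  have "(\<Sum>j<n. (\<Sum>u\<in>V. \<bar>X u\<bar> * \<psi> u j)^2) \<le> (\<Sum>j<n. (\<Sum>u\<in>V. X u * \<psi> u j)^2)"
    unfolding expand
  proof (intro sum_mono)
    fix u w assume u: "u \<in> V" and w: "w \<in> V"
    show "\<bar>X u\<bar> * \<bar>X w\<bar> * (\<Sum>j<n. \<psi> u j * \<psi> w j) \<le> X u * X w * (\<Sum>j<n. \<psi> u j * \<psi> w j)"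
    proof (cases "u = w")
      case True thus ?thesis by (simp add: abs_mult_self_eq)
    next
      case False
      have "(\<Sum>j<n. \<psi> u j * \<psi> w j) \<le> 0" using neg u w False by blast
      moreover have "X u * X w \<le> \<bar>X u\<bar> * \<bar>X w\<bar>" by (metis abs_ge_self abs_mult)
      ultimately show ?thesis by (simp add: mult_right_mono_neg)
    qed
  qed
  also have "\<dots> = 0" using ker by simp
  finally have le: "(\<Sum>j<n. (\<Sum>u\<in>V. \<bar>X u\<bar> * \<psi> u j)^2) \<le> 0" .
  have "(\<Sum>j<n. (\<Sum>u\<in>V. \<bar>X u\<bar> * \<psi> u j)^2) = 0"
    using le by (meson antisym sum_nonneg zero_le_power2)
  hence "\<forall>j\<in>{..<n}. (\<Sum>u\<in>V. \<bar>X u\<bar> * \<psi> u j)^2 = 0"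
    by (subst (asm) sum_nonneg_eq_0_iff) auto
  thus ?thesis by simp
qed



theorem theorem3p8:
  fixes V :: "'a set" and E :: "'a \<Rightarrow> 'a \<Rightarrow> bool" and d :: "'a \<Rightarrow> int"
    and \<phi> :: "'a \<Rightarrow> nat \<Rightarrow> int"
  assumes "in_S V E d"
    and "card V > 1"
    and "symplectic_embedding V E d (card V) \<phi>"
  shows "\<not> (\<exists>i < card V. \<exists>v\<in>V. \<phi> v i = -2 \<and> (\<forall>w\<in>V. w \<noteq> v \<longrightarrow> \<phi> w i = 0))"
proof
  assume "\<exists>i < card V. \<exists>v\<in>V. \<phi> v i = -2 \<and> (\<forall>w\<in>V. w \<noteq> v \<longrightarrow> \<phi> w i = 0)"
  then obtain i v where i: "i < card V" and v: "v \<in> V" and vi: "\<phi> v i = -2"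
    and wi: "\<And>w. w \<in> V \<Longrightarrow> w \<noteq> v \<Longrightarrow> \<phi> w i = 0" by blast
  define n where "n = card V"
  have min: "\<And>u. u \<in> V \<Longrightarrow> d u \<noteq> -1" using assms(1) unfolding in_S_def minimal_tree_def by blast
  have tree: "is_tree V E" using assms(1) unfolding in_S_def symplectic_plumbing_tree_def by blast
  have fin: "finite V" and EV: "\<And>a b. E a b \<Longrightarrow> a \<in> V \<and> b \<in> V" and Esym: "\<And>a b. E a b \<Longrightarrow> E b a"
    and Eirr: "\<And>a. \<not> E a a" and conn: "\<And>a b. a \<in> V \<Longrightarrow> b \<in> V \<Longrightarrow> E\<^sup>*\<^sup>* a b"
    using tree unfolding is_tree_def by blast+
  have emb_off: "\<forall>v1\<in>V. \<forall>v2\<in>V. v1 \<noteq> v2 \<longrightarrow> Qn n (\<phi> v1) (\<phi> v2) = (if E v1 v2 then 1 else 0)"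
    and emb_diag: "\<forall>u\<in>V. Qn n (\<phi> u) (\<phi> u) = d u"
    using assms(3) unfolding symplectic_embedding_def n_def by blast+
  have off: "(\<Sum>j<n. \<phi> u j * \<phi> w j) = - (if E u w then 1 else 0)"
    if "u \<in> V" "w \<in> V" "u \<noteq> w" for u w
  proof -
    have "Qn n (\<phi> u) (\<phi> w) = (if E u w then 1 else 0)" using emb_off that by blast
    thus ?thesis unfolding Qn_def by linarith
  qed
  have diag: "(\<Sum>j<n. \<phi> u j * \<phi> u j) = - d u" if "u \<in> V" for u
  proof -
    have "Qn n (\<phi> u) (\<phi> u) = d u" using emb_diag that by blast
    thus ?thesis unfolding Qn_def by linarith
  qed
  have kc0: "\<And>u. u \<in> V \<Longrightarrow> Qn n (\<phi> u) (Kn n) + Qn n (\<phi> u) (\<phi> u) = -2"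
    using assms(3) unfolding symplectic_embedding_def n_def by blast
  have Kq: "Qn n p (Kn n) = - (\<Sum>j<n. p j)" for p
    unfolding Qn_def Kn_def by simp
  have kc: "\<And>u. u \<in> V \<Longrightarrow> (\<Sum>j<n. \<phi> u j) = 2 - (\<Sum>j<n. \<phi> u j * \<phi> u j)"
  proof -
    fix u assume "u \<in> V"
    from kc0[OF this] show "(\<Sum>j<n. \<phi> u j) = 2 - (\<Sum>j<n. \<phi> u j * \<phi> u j)"
      unfolding Kq by (simp add: Qn_def)
  qed
  define \<psi> where "\<psi> u j = (if u = v \<and> j = i then 0 else \<phi> u j)" for u j
  have \<psi>0: "\<forall>u\<in>V. \<psi> u i = 0" unfolding \<psi>_def using wi by auto
  have \<psi>ne: "\<And>u. u \<noteq> v \<Longrightarrow> \<psi> u = \<phi> u" unfolding \<psi>_def by auto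
  have prod: "\<And>u w j. u \<in> V \<Longrightarrow> w \<in> V \<Longrightarrow> u \<noteq> w \<Longrightarrow> \<psi> u j * \<psi> w j = \<phi> u j * \<phi> w j"
    unfolding \<psi>_def using wi by auto
  have doff: "\<And>u w. u \<in> V \<Longrightarrow> w \<in> V \<Longrightarrow> u \<noteq> w \<Longrightarrow> (\<Sum>j<n. \<psi> u j * \<psi> w j) = - (if E u w then 1 else 0)"
    using prod off by simp
  have in_i: "i \<in> {..<n}" using i n_def by simp
  have sqv: "(\<Sum>j<n. \<phi> v j * \<phi> v j) = (\<Sum>j<n. \<psi> v j * \<psi> v j) + 4"
  proof -
    have "(\<Sum>j<n. \<phi> v j * \<phi> v j) = (\<Sum>j<n. \<psi> v j * \<psi> v j + (if j = i then 4 else 0))"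
      by (rule sum.cong) (auto simp: \<psi>_def vi)
    also have "\<dots> = (\<Sum>j<n. \<psi> v j * \<psi> v j) + 4"
      using in_i by (simp add: sum.distrib)
    finally show ?thesis .
  qed
  have sumv: "(\<Sum>j<n. \<phi> v j) = (\<Sum>j<n. \<psi> v j) - 2"
  proof -
    have "(\<Sum>j<n. \<phi> v j) = (\<Sum>j<n. \<psi> v j + (if j = i then -2 else 0))"
      by (rule sum.cong) (auto simp: \<psi>_def vi)
    also have "\<dots> = (\<Sum>j<n. \<psi> v j) - 2"
      using in_i by (simp add: sum.distrib)
    finally show ?thesis .
  qed
  obtain X where X: "\<exists>u\<in>V. X u \<noteq> 0" and kerX: "\<forall>j<n. (\<Sum>u\<in>V. X u * \<psi> u j) = 0"
    using kernel_exists[of V i \<psi>, OF fin i \<psi>0] n_def by blast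
  define Y where "Y u = \<bar>X u\<bar>" for u
  have Ynn: "\<And>u. Y u \<ge> 0" unfolding Y_def by simp
  obtain u1 where u1: "u1 \<in> V" "Y u1 \<noteq> 0" using X Y_def by auto
  have ker: "\<forall>j<n. (\<Sum>u\<in>V. Y u * \<psi> u j) = 0"
    unfolding Y_def
    by (rule abs_kernel[OF fin _ kerX]) (simp add: doff)
  have E2: "(\<Sum>u\<in>V. Y u * (\<Sum>j<n. \<psi> u j)) = 0"
  proof -
    have "(\<Sum>u\<in>V. Y u * (\<Sum>j<n. \<psi> u j)) = (\<Sum>j<n. \<Sum>u\<in>V. Y u * \<psi> u j)"
      by (simp add: sum_distrib_left sum.swap[of _ V])
    also have "\<dots> = 0" using ker by simp
    finally show ?thesis .
  qed
  have E1: "(\<Sum>w\<in>V. Y w * (\<Sum>j<n. \<psi> w j * \<psi> a j)) = 0" if "a \<in> V" for a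
  proof -
    have "(\<Sum>w\<in>V. Y w * (\<Sum>j<n. \<psi> w j * \<psi> a j)) = (\<Sum>j<n. \<psi> a j * (\<Sum>w\<in>V. Y w * \<psi> w j))"
      by (simp add: sum_distrib_left sum.swap[of _ V] mult_ac)
    also have "\<dots> = 0" using ker by simp
    finally show ?thesis .
  qed
  have snp: "Y u * (\<Sum>j<n. \<psi> u j) \<le> 0" if u: "u \<in> V" for u
  proof (cases "u = v")
    case True
    have "0 \<le> (\<Sum>j<n. \<psi> v j * \<psi> v j)" by (simp add: sum_nonneg)
    moreover have "(\<Sum>j<n. \<psi> v j) = - (\<Sum>j<n. \<psi> v j * \<psi> v j)"
      using kc[OF v] sqv sumv by simp
    ultimately show ?thesis using True Ynn[of u] by (simp add: mult_nonneg_nonpos)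
  next
    case False
    define b where "b = (\<Sum>j<n. \<phi> u j * \<phi> u j)"
    have b0: "b \<ge> 0" unfolding b_def by (simp add: sum_nonneg)
    have b1: "b \<noteq> 1" using min[OF u] diag[OF u] b_def by simp
    have b2: "b \<noteq> 0"
    proof
      assume "b = 0"
      hence "\<forall>j\<in>{..<n}. \<phi> u j * \<phi> u j = 0" unfolding b_def
        by (subst (asm) sum_nonneg_eq_0_iff) auto
      hence "(\<Sum>j<n. \<phi> u j) = 0" by simp
      thus False using kc[OF u] \<open>b = 0\<close> b_def by simp
    qed
    have "(\<Sum>j<n. \<psi> u j) \<le> 0" using kc[OF u] \<psi>ne[OF False] b0 b1 b2 b_def by simp
    thus ?thesis using Ynn[of u] by (simp add: mult_nonneg_nonpos)
  qed
  have allz: "\<forall>u\<in>V. Y u * (\<Sum>j<n. \<psi> u j) = 0"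
  proof -
    have "(\<Sum>u\<in>V. - (Y u * (\<Sum>j<n. \<psi> u j))) = 0" using E2 by (simp add: sum_negf)
    hence "\<forall>u\<in>V. - (Y u * (\<Sum>j<n. \<psi> u j)) = 0"
      using sum_nonneg_eq_0_iff[OF fin, of "\<lambda>u. - (Y u * (\<Sum>j<n. \<psi> u j))"] snp by auto
    thus ?thesis by simp
  qed
  obtain w0 where w0: "w0 \<in> V" "w0 \<noteq> v"
  proof -
    have "V - {v} \<noteq> {}"
    proof
      assume "V - {v} = {}"
      hence "V \<subseteq> {v}" by blast
      hence "card V \<le> card {v}" by (rule card_mono[rotated]) simp
      thus False using assms(2) by simp
    qed
    thus ?thesis using that by blast
  qed
  have "E\<^sup>*\<^sup>* v w0" using conn v w0 by blast
  then obtain u where Evu: "E v u" using w0(2) by (metis converse_rtranclpE)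
  have uV: "u \<in> V" and uv: "u \<noteq> v" using EV[OF Evu] Eirr Evu by auto
  have Yv: "Y v = 0"
  proof (rule ccontr)
    assume "Y v \<noteq> 0"
    hence "(\<Sum>j<n. \<psi> v j) = 0" using allz v by auto
    hence "(\<Sum>j<n. \<psi> v j * \<psi> v j) = 0" using kc[OF v] sqv sumv by simp
    hence "\<forall>j\<in>{..<n}. \<psi> v j * \<psi> v j = 0"
      by (subst (asm) sum_nonneg_eq_0_iff) auto
    hence "(\<Sum>j<n. \<psi> v j * \<psi> u j) = 0" by simp
    thus False using doff[OF v uV uv[symmetric]] Evu by simp
  qed
  have propg: "Y b = 0" if "E a b" "Y a = 0" for a b
  proof -
    have aV: "a \<in> V" and bV: "b \<in> V" using EV that(1) by auto
    have ab: "a \<noteq> b" using Eirr that(1) by auto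
    have "0 = (\<Sum>w\<in>V. Y w * (\<Sum>j<n. \<psi> w j * \<psi> a j))" using E1[OF aV] by simp
    also have "\<dots> = Y a * (\<Sum>j<n. \<psi> a j * \<psi> a j) + (\<Sum>w\<in>V-{a}. Y w * (\<Sum>j<n. \<psi> w j * \<psi> a j))"
      using fin aV by (simp add: sum.remove)
    also have "(\<Sum>w\<in>V-{a}. Y w * (\<Sum>j<n. \<psi> w j * \<psi> a j)) = (\<Sum>w\<in>V-{a}. - (if E w a then Y w else 0))"
      by (rule sum.cong) (auto simp: doff aV)
    finally have "(\<Sum>w\<in>V-{a}. (if E w a then Y w else 0)) = 0" using that(2) by (simp add: sum_negf)
    hence "\<forall>w\<in>V-{a}. (if E w a then Y w else 0) = 0"
      using sum_nonneg_eq_0_iff[of "V-{a}" "\<lambda>w. if E w a then Y w else 0"] fin Ynn by auto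
    thus ?thesis using bV ab Esym[OF that(1)] by force
  qed
  have "Y a = 0" if "E\<^sup>*\<^sup>* v a" for a
    using that
  proof (induction rule: rtranclp_induct)
    case base thus ?case using Yv .
  next
    case (step a b) thus ?case using propg by blast
  qed
  thus False using conn[OF v u1(1)] u1(2) by blast
qed

end
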